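(* Under the standing assumptions (A1)–(A4), let $\alpha>0$, $0<\gamma<\frac1{m-1}$, and consider the system (Algorithm B) $$\begin{aligned} \dot x&=\mathrm{Prox}_{F^m}\Big[x-\nabla F^0(x)+v+\gamma\textstyle\sum_{j=1}^{m-1}z^j\Big]-x,\\ \dot z^j&=\mathrm{Prox}_{F^j}[x-\gamma z^j]-x,\quad j=1,\dots,m-1,\\ \dot v&=-Y^{-1}(x-d)-\alpha L_{nq}v-w,\\ \dot w&=\alpha L_{nq}v,\\ \dot y&=-L_{nn}y, \end{aligned}$$ with state $(x,z,v,w,y)\in\mathbb{R}^{nq}\times\mathbb{R}^{(m-1)nq}\times\mathbb{R}^{nq}\times\mathbb{R}^{nq}\times\mathbb{R}^{n^2}$. If $(x^*,z^*,v^*,w^*,y^* )$ is an equilibrium of this system with $(\mathbf{1}_n\otimes I_q)^TH_{nq}w^*=\mathbf{0}_q$ and $y^*=\mathbf{1}_n\otimes h$, then $x^*$ is a solution of the problem $\min_x\sum_if_i(x_i)$ s.t. $\sum_ix_i=\sum_id_i$.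
   Context: Standing setup: $n$ agents; agent $i$ has state $x_i\in\mathbb{R}^q$, $x=(x_1^T,\dots,x_n^T)^T$. Given $d_i\in\mathbb{R}^q$, $d=(d_1^T,\dots,d_n^T)^T$. Integer $m\ge2$. $f_i=\sum_{j=0}^mf_i^j$; $F^j(x)=\sum_if_i^j(x_i)$; $\nabla F^0(x)=(\nabla f_1^0(x_1)^T,\dots,\nabla f_n^0(x_n)^T)^T$. Assumptions: (A1) each $f_i^0$ is twice continuously differentiable and strongly convex with a common constant $c>m-1$; (A2) each $f_i^j$, $j=1,\dots,m$, is proper closed convex; (A3) weighted directed strongly connected graph; (A4) feasibility. $\mathrm{prox}_f[\theta]=\arg\min_\delta\{f(\delta)+\frac12\|\delta-\theta\|^2\}$, $\mathrm{Prox}_{F^j}[\xi]=(\mathrm{prox}_{f_1^j}[\xi_1]^T,\dots,\mathrm{prox}_{f_n^j}[\xi_n]^T)^T$. Graph: adjacency $\mathcal{A}=[a_{ij}]$, Laplacian $L_n=D^{in}-\mathcal{A}$, $D^{in}=\mathrm{diag}(\sum_ja_{ij})$; $h$ positive left eigenvector with $h^TL_n=0$, $\sum_ih_i=1$; $H_{nq}=\mathrm{diag}(h_1,\dots,h_n)\otimes I_q$, $L_{nq}=L_n\otimes I_q$, $L_{nn}=L_n\otimes I_n$. The vector $y=(y_1^T,\dots,y_n^T)^T$ with $y_i=(y_i^1,\dots,y_i^n)^T\in\mathbb{R}^n$, and $Y=\mathrm{diag}(y_1^1,y_2^2,\dots,y_n^n)\otimes I_q$ (assumed invertible where used). *)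

theory Defs
  imports "HOL-Analysis.Analysis"
begin

definition proper_fun :: "('a \<Rightarrow> ereal) \<Rightarrow> bool" where
  "proper_fun f \<longleftrightarrow> (\<forall>x. f x \<noteq> -\<infinity>) \<and> (\<exists>x. f x \<noteq> \<infinity>)"

definition closed_fun :: "('a::topological_space \<Rightarrow> ereal) \<Rightarrow> bool" where
  "closed_fun f \<longleftrightarrow> closed {(x, t::real). f x \<le> ereal t}"

definition convex_efun :: "('a::real_vector \<Rightarrow> ereal) \<Rightarrow> bool" where
  "convex_efun f \<longleftrightarrow> (\<forall>x y (t::real). 0 \<le> t \<and> t \<le> 1 \<longrightarrow>
      f (t *\<^sub>R x + (1 - t) *\<^sub>R y) \<le> ereal t * f x + ereal (1 - t) * f y)"

definition proper_closed_convex :: "('a::real_normed_vector \<Rightarrow> ereal) \<Rightarrow> bool" where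
  "proper_closed_convex f \<longleftrightarrow> proper_fun f \<and> closed_fun f \<and> convex_efun f"

definition strongly_convex :: "real \<Rightarrow> ('a::real_normed_vector \<Rightarrow> real) \<Rightarrow> bool" where
  "strongly_convex c f \<longleftrightarrow> c > 0 \<and> (\<forall>x y (t::real). 0 \<le> t \<and> t \<le> 1 \<longrightarrow>
      f (t *\<^sub>R x + (1 - t) *\<^sub>R y) \<le> t * f x + (1 - t) * f y - c / 2 * t * (1 - t) * (norm (x - y))\<^sup>2)"

definition twice_cont_diff :: "('a::real_inner \<Rightarrow> real) \<Rightarrow> bool" where
  "twice_cont_diff f \<longleftrightarrow> (\<exists>g H. (\<forall>x. GDERIV f x :> g x) \<and> (\<forall>x. (g has_derivative H x) (at x))
       \<and> (\<forall>v. continuous_on UNIV (\<lambda>x. H x v)))"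

definition grad :: "('a::real_inner \<Rightarrow> real) \<Rightarrow> 'a \<Rightarrow> 'a" where
  "grad f x = (SOME D. GDERIV f x :> D)"

definition prox :: "('a::real_normed_vector \<Rightarrow> ereal) \<Rightarrow> 'a \<Rightarrow> 'a" where
  "prox f \<theta> = (THE \<delta>. \<forall>\<delta>'. f \<delta> + ereal ((norm (\<delta> - \<theta>))\<^sup>2 / 2) \<le> f \<delta>' + ereal ((norm (\<delta>' - \<theta>))\<^sup>2 / 2))"

definition laplacian :: "('n::finite \<Rightarrow> 'n \<Rightarrow> real) \<Rightarrow> 'n \<Rightarrow> 'n \<Rightarrow> real" where
  "laplacian a i j = (if i = j then (\<Sum>k\<in>UNIV. a i k) else 0) - a i j"

text \<open>Weighted digraph: edge j -> i iff a_ij > 0 (agent i receives from j). Strongly connected.\<close>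
definition strongly_connected_graph :: "('n::finite \<Rightarrow> 'n \<Rightarrow> real) \<Rightarrow> bool" where
  "strongly_connected_graph a \<longleftrightarrow> (\<forall>i j. a i j \<ge> 0) \<and>
     (\<forall>i j. (i, j) \<in> {(k, l). a l k > 0}\<^sup>*)"

text \<open>Block Laplacian action (L_n \<otimes> I) on stacked vectors.\<close>
definition lap_apply :: "('n::finite \<Rightarrow> 'n \<Rightarrow> real) \<Rightarrow> ('n \<Rightarrow> 'v::real_vector) \<Rightarrow> 'n \<Rightarrow> 'v" where
  "lap_apply a v i = (\<Sum>j\<in>UNIV. laplacian a i j *\<^sub>R v j)"

end

theory Submission
  imports Defs
begin


lemma grad_ineq:
  fixes f :: "'a::euclidean_space \<Rightarrow> real"
  assumes sc: "strongly_convex c f" and tc: "twice_cont_diff f"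
  shows "f y \<ge> f x + inner (grad f x) (y - x)"
proof -
  from tc obtain g where g: "\<And>x. GDERIV f x :> g x" unfolding twice_cont_diff_def by blast
  have gd: "GDERIV f x :> grad f x" unfolding grad_def by (rule someI, rule g)
  define \<phi> where "\<phi> t = f (x + t *\<^sub>R (y - x))" for t
  have cvx: "convex_on UNIV \<phi>"
  proof (rule convex_onI)
    fix t u v :: real assume t: "t > 0" "t < 1"
    have e: "(1 - t) *\<^sub>R (x + u *\<^sub>R (y - x)) + t *\<^sub>R (x + v *\<^sub>R (y - x))
       = t *\<^sub>R (x + v *\<^sub>R (y - x)) + (1 - t) *\<^sub>R (x + u *\<^sub>R (y - x))" by simp
    have e2: "x + ((1 - t) * u + t * v) *\<^sub>R (y - x) = (1 - t) *\<^sub>R (x + u *\<^sub>R (y - x)) + t *\<^sub>R (x + v *\<^sub>R (y - x))"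
      by (simp add: algebra_simps)
    have "c > 0" using sc unfolding strongly_convex_def by simp
    then have nn: "c / 2 * t * (1 - t) * (norm ((x + v *\<^sub>R (y - x)) - (x + u *\<^sub>R (y - x))))\<^sup>2 \<ge> 0"
      using t by simp
    have "f (t *\<^sub>R (x + v *\<^sub>R (y - x)) + (1 - t) *\<^sub>R (x + u *\<^sub>R (y - x)))
        \<le> t * f (x + v *\<^sub>R (y - x)) + (1 - t) * f (x + u *\<^sub>R (y - x))
           - c / 2 * t * (1 - t) * (norm ((x + v *\<^sub>R (y - x)) - (x + u *\<^sub>R (y - x))))\<^sup>2"
      using sc t unfolding strongly_convex_def
      by (metis (no_types, lifting) less_eq_real_def)
    then have "f (x + ((1 - t) * u + t * v) *\<^sub>R (y - x)) \<le> t * \<phi> v + (1 - t) * \<phi> u"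
      unfolding \<phi>_def e2 e using nn by linarith
    then show "\<phi> ((1 - t) *\<^sub>R u + t *\<^sub>R v) \<le> (1 - t) * \<phi> u + t * \<phi> v"
      unfolding \<phi>_def by simp
  qed simp
  have d1: "((\<lambda>t. x + t *\<^sub>R (y - x)) has_derivative (\<lambda>t. t *\<^sub>R (y - x))) (at 0)"
    by (auto intro!: derivative_eq_intros)
  have d2: "(f has_derivative (\<lambda>h. inner h (grad f x))) (at (x + 0 *\<^sub>R (y - x)))"
    using gd unfolding gderiv_def by simp
  have "(\<phi> has_derivative (\<lambda>t. inner (t *\<^sub>R (y - x)) (grad f x))) (at 0)"
    unfolding \<phi>_def by (rule has_derivative_compose[OF d1 d2])
  then have "(\<phi> has_field_derivative inner (y - x) (grad f x)) (at 0 within UNIV)"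
    unfolding has_field_derivative_def by (simp add: mult.commute[of _ "inner _ _"] )
  from convex_on_imp_above_tangent[OF cvx _ _ _ this, of 1]
  have "\<phi> 1 - \<phi> 0 \<ge> inner (y - x) (grad f x)" by simp
  then show ?thesis unfolding \<phi>_def by (simp add: inner_commute)
qed




lemma epi_convex:
  fixes f :: "'a::real_normed_vector \<Rightarrow> ereal"
  assumes "convex_efun f"
  shows "convex {(x, t::real). f x \<le> ereal t}"
proof (rule convexI)
  fix p q :: "'a \<times> real" and u v :: real
  assume p: "p \<in> {(x, t). f x \<le> ereal t}" and q: "q \<in> {(x, t). f x \<le> ereal t}"
    and uv: "0 \<le> u" "0 \<le> v" "u + v = 1"
  obtain x s where ps: "p = (x, s)" by fastforce
  obtain y r where qr: "q = (y, r)" by fastforce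
  have fx: "f x \<le> ereal s" and fy: "f y \<le> ereal r" using p q ps qr by auto
  have v: "v = 1 - u" using uv by simp
  have "f (u *\<^sub>R x + (1 - u) *\<^sub>R y) \<le> ereal u * f x + ereal (1 - u) * f y"
    using assms uv unfolding convex_efun_def v by auto
  also have "\<dots> \<le> ereal u * ereal s + ereal (1 - u) * ereal r"
    using uv v by (intro add_mono ereal_mult_left_mono fx fy) auto
  finally show "u *\<^sub>R p + v *\<^sub>R q \<in> {(x, t). f x \<le> ereal t}"
    using ps qr v by simp
qed

lemma affine_minorant:
  fixes f :: "'a::euclidean_space \<Rightarrow> ereal"
  assumes "proper_closed_convex f"
  shows "\<exists>a b. \<forall>x. ereal (inner a x + b) \<le> f x"
proof -
  let ?E = "{(x, t::real). f x \<le> ereal t}"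
  have cv: "convex ?E" using assms epi_convex unfolding proper_closed_convex_def by blast
  have cl: "closed ?E" using assms unfolding proper_closed_convex_def closed_fun_def by blast
  obtain x0 where x0: "f x0 \<noteq> \<infinity>" using assms unfolding proper_closed_convex_def proper_fun_def by blast
  have "f x0 \<noteq> -\<infinity>" using assms unfolding proper_closed_convex_def proper_fun_def by blast
  with x0 obtain r0 where r0: "f x0 = ereal r0" by (cases "f x0") auto
  have "(x0, r0 - 1) \<notin> ?E" using r0 by simp
  from separating_hyperplane_closed_point[OF cv cl this]
  obtain A b where Ab: "inner A (x0, r0 - 1) < b" "\<forall>z\<in>?E. inner A z > b" by blast
  obtain a1 a2 where A: "A = (a1, a2)" by fastforce
  have "(x0, r0) \<in> ?E" using r0 by simp
  with Ab A have "inner a1 x0 + a2 * (r0 - 1) < b" "b < inner a1 x0 + a2 * r0"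
    by (auto simp: inner_Pair)
  then have a2: "a2 > 0" by (simp add: algebra_simps)
  have "ereal (inner (- a1 /\<^sub>R a2) x + b / a2) \<le> f x" for x
  proof (cases "f x")
    case (real r)
    then have "(x, r) \<in> ?E" by simp
    with Ab A have "b < inner a1 x + a2 * r" by (auto simp: inner_Pair)
    then have "inner (- a1 /\<^sub>R a2) x + b / a2 \<le> r"
      using a2 by (simp add: field_simps)
    then show ?thesis using real by simp
  next
    case PInf then show ?thesis by simp
  next
    case MInf then show ?thesis using assms unfolding proper_closed_convex_def proper_fun_def by blast
  qed
  then show ?thesis by blast
qed



lemma sub_closed:
  fixes f :: "'a::euclidean_space \<Rightarrow> ereal"
  assumes "closed_fun f"
  shows "closed {x. f x + ereal ((norm (x - \<theta>))\<^sup>2 / 2) \<le> ereal r}"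
proof -
  have eq: "{x. f x + ereal ((norm (x - \<theta>))\<^sup>2 / 2) \<le> ereal r}
     = (\<lambda>x. (x, r - (norm (x - \<theta>))\<^sup>2 / 2)) -` {(x, t::real). f x \<le> ereal t}"
  proof (rule set_eqI)
    fix x show "x \<in> {x. f x + ereal ((norm (x - \<theta>))\<^sup>2 / 2) \<le> ereal r} \<longleftrightarrow>
       x \<in> (\<lambda>x. (x, r - (norm (x - \<theta>))\<^sup>2 / 2)) -` {(x, t::real). f x \<le> ereal t}"
      by (cases "f x") auto
  qed
  show ?thesis unfolding eq
    using assms unfolding closed_fun_def
    by (intro continuous_closed_vimage) (auto intro!: continuous_intros)
qed

lemma norm_bound_aux:
  fixes u A C :: real
  assumes "u \<ge> 0" "A \<ge> 0" "u * u \<le> 2 * C + 2 * A * u"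
  shows "u \<le> 1 + 2 * \<bar>C\<bar> + 2 * A"
proof (cases "u \<le> 1")
  case True then show ?thesis using assms by simp
next
  case False
  then have "u * u \<le> (2 * \<bar>C\<bar> + 2 * A) * u"
  proof -
    have "\<bar>C\<bar> * 1 \<le> \<bar>C\<bar> * u" using False by (intro mult_left_mono) auto
    moreover have "C \<le> \<bar>C\<bar>" by simp
    ultimately have "2 * C \<le> 2 * \<bar>C\<bar> * u" by linarith
    then show ?thesis using assms(3) by (simp add: algebra_simps)
  qed
  then have "u \<le> 2 * \<bar>C\<bar> + 2 * A" using False by simp
  then show ?thesis by simp
qed

lemma sub_bounded:
  fixes f :: "'a::euclidean_space \<Rightarrow> ereal"
  assumes ab: "\<forall>x. ereal (inner a x + b) \<le> f x"
  shows "bounded {x. f x + ereal ((norm (x - \<theta>))\<^sup>2 / 2) \<le> ereal r}"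
proof -
  let ?C = "r - b - inner a \<theta>"
  let ?K = "1 + 2 * \<bar>?C\<bar> + 2 * norm a"
  have "{x. f x + ereal ((norm (x - \<theta>))\<^sup>2 / 2) \<le> ereal r} \<subseteq> cball \<theta> ?K"
  proof
    fix x assume x: "x \<in> {x. f x + ereal ((norm (x - \<theta>))\<^sup>2 / 2) \<le> ereal r}"
    have "ereal (inner a x + b) + ereal ((norm (x - \<theta>))\<^sup>2 / 2) \<le> ereal r"
    proof -
      have "ereal (inner a x + b) + ereal ((norm (x - \<theta>))\<^sup>2 / 2) \<le> f x + ereal ((norm (x - \<theta>))\<^sup>2 / 2)"
        using ab by (intro add_right_mono) auto
      also have "\<dots> \<le> ereal r" using x by simp
      finally show ?thesis .
    qed
    then have h: "inner a x + b + (norm (x - \<theta>))\<^sup>2 / 2 \<le> r" by simp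
    have cs: "- inner a (x - \<theta>) \<le> norm a * norm (x - \<theta>)"
      by (metis Cauchy_Schwarz_ineq2 abs_le_iff)
    have "inner a x = inner a (x - \<theta>) + inner a \<theta>" by (simp add: inner_diff_right)
    moreover have "(norm (x - \<theta>))\<^sup>2 = norm (x - \<theta>) * norm (x - \<theta>)" by (rule power2_eq_square)
    ultimately have "norm (x - \<theta>) * norm (x - \<theta>) \<le> 2 * ?C + 2 * norm a * norm (x - \<theta>)"
      using h cs by (simp add: algebra_simps)
    from norm_bound_aux[OF _ _ this] have "norm (x - \<theta>) \<le> ?K" by simp
    then show "x \<in> cball \<theta> ?K" by (simp add: dist_norm norm_minus_commute)
  qed
  then show ?thesis using bounded_cball bounded_subset by blast
qed


lemma prox_exists:
  fixes f :: "'a::euclidean_space \<Rightarrow> ereal"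
  assumes pcc: "proper_closed_convex f"
  shows "\<exists>p. \<forall>y. f p + ereal ((norm (p - \<theta>))\<^sup>2 / 2) \<le> f y + ereal ((norm (y - \<theta>))\<^sup>2 / 2)"
proof -
  define \<psi> where "\<psi> x = f x + ereal ((norm (x - \<theta>))\<^sup>2 / 2)" for x
  obtain a b where ab: "\<forall>x. ereal (inner a x + b) \<le> f x" using affine_minorant[OF pcc] by blast
  have cf: "closed_fun f" using pcc unfolding proper_closed_convex_def by blast
  obtain x0 where x0: "f x0 \<noteq> \<infinity>" using pcc unfolding proper_closed_convex_def proper_fun_def by blast
  have "f x0 \<noteq> -\<infinity>" using pcc unfolding proper_closed_convex_def proper_fun_def by blast
  with x0 obtain r0 where r0: "f x0 = ereal r0" by (cases "f x0") auto
  define \<mu> where "\<mu> = (INF x. \<psi> x)"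
  have mu_le: "\<mu> \<le> \<psi> y" for y unfolding \<mu>_def by (rule INF_lower) simp
  have lb: "ereal (b + inner a \<theta> - (norm a)\<^sup>2 / 2) \<le> \<psi> x" for x
  proof -
    have cs: "- inner a (x - \<theta>) \<le> norm a * norm (x - \<theta>)"
      by (metis Cauchy_Schwarz_ineq2 abs_le_iff)
    have e: "inner a x = inner a (x - \<theta>) + inner a \<theta>" by (simp add: inner_diff_right)
    have sq: "0 \<le> (norm (x - \<theta>) - norm a)\<^sup>2" by simp
    have "b + inner a \<theta> - (norm a)\<^sup>2 / 2 \<le> inner a x + b + (norm (x - \<theta>))\<^sup>2 / 2"
      proof -
      have "(norm (x - \<theta>) - norm a)\<^sup>2 = (norm (x - \<theta>))\<^sup>2 - 2 * (norm (x - \<theta>) * norm a) + (norm a)\<^sup>2"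
        by (simp add: power2_diff)
      then show ?thesis using cs e sq by (simp add: mult.commute)
    qed
    then have "ereal (b + inner a \<theta> - (norm a)\<^sup>2 / 2) \<le> ereal (inner a x + b) + ereal ((norm (x - \<theta>))\<^sup>2 / 2)"
      by simp
    also have "\<dots> \<le> \<psi> x" unfolding \<psi>_def using ab by (intro add_right_mono) auto
    finally show ?thesis .
  qed
  have "ereal (b + inner a \<theta> - (norm a)\<^sup>2 / 2) \<le> \<mu>" unfolding \<mu>_def by (rule INF_greatest) (rule lb)
  moreover have "\<mu> \<le> ereal (r0 + (norm (x0 - \<theta>))\<^sup>2 / 2)" using mu_le[of x0] r0 unfolding \<psi>_def by simp
  ultimately obtain m0 where m0: "\<mu> = ereal m0" by (cases \<mu>) auto
  define K where "K n = {x. \<psi> x \<le> ereal (m0 + 1 / real (Suc n))}" for n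
  have Kc: "compact (K n)" for n
    unfolding compact_eq_bounded_closed K_def \<psi>_def
    using sub_closed[OF cf] sub_bounded[OF ab] by blast
  have Kne: "K n \<noteq> {}" for n
  proof -
    have "\<mu> < ereal (m0 + 1 / real (Suc n))" using m0 by simp
    then have "\<exists>x. \<psi> x < ereal (m0 + 1 / real (Suc n))" unfolding \<mu>_def INF_less_iff by simp
    then obtain x where "\<psi> x < ereal (m0 + 1 / real (Suc n))" by blast
    then have "x \<in> K n" unfolding K_def by simp
    then show ?thesis by blast
  qed
  have Kmono: "K n \<subseteq> K k" if "k \<le> n" for k n
  proof -
    have "real (Suc k) \<le> real (Suc n)" using that by simp
    then have "1 / real (Suc n) \<le> 1 / real (Suc k)" by (rule divide_left_mono) auto
    then have le: "ereal (m0 + 1 / real (Suc n)) \<le> ereal (m0 + 1 / real (Suc k))" by simp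
    show ?thesis
    proof
      fix x assume "x \<in> K n"
      then have "\<psi> x \<le> ereal (m0 + 1 / real (Suc n))" unfolding K_def by simp
      then have "\<psi> x \<le> ereal (m0 + 1 / real (Suc k))" using le by (rule order_trans)
      then show "x \<in> K k" unfolding K_def by simp
    qed
  qed
  have "\<Inter>(range K) \<noteq> {}" by (rule compact_nest[OF Kc Kne Kmono])
  then obtain p where p0: "p \<in> \<Inter>(range K)" by (meson ex_in_conv)
  have p: "p \<in> K n" for n using p0 by (rule InterD) (rule rangeI)
  have "\<psi> p \<le> \<mu>"
  proof (rule ereal_le_epsilon2)
    fix e :: real assume "0 < e"
    then obtain n where n: "inverse (real (Suc n)) < e" using reals_Archimedean by blast
    have "\<psi> p \<le> ereal (m0 + 1 / real (Suc n))" using p[of n] unfolding K_def by simp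
    also have "\<dots> \<le> \<mu> + ereal e" unfolding m0 using n by (simp add: inverse_eq_divide)
    finally show "\<psi> p \<le> \<mu> + ereal e" .
  qed
  then have "\<forall>y. \<psi> p \<le> \<psi> y" using mu_le by (meson order_trans)
  then show ?thesis unfolding \<psi>_def by blast
qed

lemma norm_sq_expand:
  fixes w d :: "'a::real_inner"
  shows "(norm (w + t *\<^sub>R d))\<^sup>2 = (norm w)\<^sup>2 + 2 * t * inner w d + t\<^sup>2 * (norm d)\<^sup>2"
  unfolding power2_norm_eq_inner by (simp add: inner_add_left inner_add_right inner_commute power2_eq_square algebra_simps)

lemma parallelogram_mid:
  fixes u v :: "'a::real_inner"
  shows "(norm ((1/2) *\<^sub>R u + (1/2) *\<^sub>R v))\<^sup>2 = (norm u)\<^sup>2 / 2 + (norm v)\<^sup>2 / 2 - (norm (u - v))\<^sup>2 / 4"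
  unfolding power2_norm_eq_inner
  by (simp add: inner_add_left inner_add_right inner_diff_left inner_diff_right inner_commute algebra_simps) (simp add: field_simps)

lemma lim_aux:
  fixes A B C :: real
  assumes "\<And>t. 0 < t \<Longrightarrow> t \<le> 1 \<Longrightarrow> A \<le> B + t * C" and "C \<ge> 0"
  shows "A \<le> B"
proof (rule ccontr)
  assume "\<not> A \<le> B"
  then have d: "A - B > 0" by simp
  define t where "t = min 1 ((A - B) / (2 * (C + 1)))"
  have t0: "t > 0" using d assms(2) unfolding t_def by simp
  have t1: "t \<le> 1" unfolding t_def by simp
  have "t * C \<le> (A - B) / (2 * (C + 1)) * C" unfolding t_def using assms(2) by (intro mult_right_mono) auto
  also have "\<dots> < A - B"
  proof -
    have "(A - B) * C < (A - B) * (2 * (C + 1))" using d assms(2) by (intro mult_strict_left_mono) auto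
    then show ?thesis using assms(2) by (simp add: field_simps)
  qed
  finally show False using assms(1)[OF t0 t1] by simp
qed

lemma prox_unique:
  fixes f :: "'a::euclidean_space \<Rightarrow> ereal"
  assumes cv: "convex_efun f" and nm: "\<forall>x. f x \<noteq> -\<infinity>"
    and fp: "f p = ereal A" and fq: "f q = ereal B"
    and mp: "\<forall>y. f p + ereal ((norm (p - \<theta>))\<^sup>2 / 2) \<le> f y + ereal ((norm (y - \<theta>))\<^sup>2 / 2)"
    and mq: "\<forall>y. f q + ereal ((norm (q - \<theta>))\<^sup>2 / 2) \<le> f y + ereal ((norm (y - \<theta>))\<^sup>2 / 2)"
  shows "p = q"
proof -
  define z where "z = (1/2::real) *\<^sub>R p + (1 - 1/2) *\<^sub>R q"
  have "f z \<le> ereal (1/2) * f p + ereal (1 - 1/2) * f q"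
    using cv[unfolded convex_efun_def, rule_format, of "1/2" p q] unfolding z_def by simp
  also have "\<dots> = ereal (A/2 + B/2)" using fp fq by simp
  finally have fz: "f z \<le> ereal (A/2 + B/2)" .
  then obtain M where M: "f z = ereal M" using nm by (cases "f z") auto
  with fz have M1: "M \<le> A/2 + B/2" by simp
  have h1: "A + (norm (p - \<theta>))\<^sup>2 / 2 \<le> B + (norm (q - \<theta>))\<^sup>2 / 2" using mp fp fq by (metis plus_ereal.simps(1) ereal_less_eq(3))
  have h2: "B + (norm (q - \<theta>))\<^sup>2 / 2 \<le> A + (norm (p - \<theta>))\<^sup>2 / 2" using mq fp fq by (metis plus_ereal.simps(1) ereal_less_eq(3))
  have h3: "A + (norm (p - \<theta>))\<^sup>2 / 2 \<le> M + (norm (z - \<theta>))\<^sup>2 / 2" using mp fp M by (metis plus_ereal.simps(1) ereal_less_eq(3))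
  have hh: "(1/2::real) *\<^sub>R \<theta> + (1/2::real) *\<^sub>R \<theta> = \<theta>" by (simp add: scaleR_add_left[symmetric])
  have "z - \<theta> = (1/2) *\<^sub>R (p - \<theta>) + (1/2) *\<^sub>R (q - \<theta>)" unfolding z_def by (simp add: algebra_simps hh)
  then have "(norm (z - \<theta>))\<^sup>2 = (norm (p - \<theta>))\<^sup>2 / 2 + (norm (q - \<theta>))\<^sup>2 / 2 - (norm (p - q))\<^sup>2 / 4"
    using parallelogram_mid[of "p - \<theta>" "q - \<theta>"] by simp
  with h1 h2 h3 M1 have "(norm (p - q))\<^sup>2 \<le> 0" by linarith
  then show ?thesis by simp
qed

lemma prox_subgrad:
  fixes f :: "'a::euclidean_space \<Rightarrow> ereal"
  assumes cv: "convex_efun f" and nm: "\<forall>x. f x \<noteq> -\<infinity>"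
    and fp: "f p = ereal A"
    and mp: "\<forall>y. f p + ereal ((norm (p - \<theta>))\<^sup>2 / 2) \<le> f y + ereal ((norm (y - \<theta>))\<^sup>2 / 2)"
  shows "ereal (A + inner (\<theta> - p) (y - p)) \<le> f y"
proof (cases "f y")
  case PInf then show ?thesis by simp
next
  case MInf then show ?thesis using nm by simp
next
  case (real Y)
  have "A \<le> Y + inner (p - \<theta>) (y - p) + t * ((norm (y - p))\<^sup>2 / 2)" if t: "0 < t" "t \<le> 1" for t
  proof -
    define z where "z = t *\<^sub>R y + (1 - t) *\<^sub>R p"
    have "f z \<le> ereal t * f y + ereal (1 - t) * f p" using cv t unfolding convex_efun_def z_def by simp
    also have "\<dots> = ereal (t * Y + (1 - t) * A)" using fp real by simp
    finally have fz: "f z \<le> ereal (t * Y + (1 - t) * A)" .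
    then obtain M where M: "f z = ereal M" using nm by (cases "f z") auto
    with fz have M1: "M \<le> t * Y + (1 - t) * A" by simp
    have h3: "A + (norm (p - \<theta>))\<^sup>2 / 2 \<le> M + (norm (z - \<theta>))\<^sup>2 / 2" using mp fp M by (metis plus_ereal.simps(1) ereal_less_eq(3))
    have "z - \<theta> = (p - \<theta>) + t *\<^sub>R (y - p)" unfolding z_def by (simp add: algebra_simps)
    then have e: "(norm (z - \<theta>))\<^sup>2 = (norm (p - \<theta>))\<^sup>2 + 2 * t * inner (p - \<theta>) (y - p) + t\<^sup>2 * (norm (y - p))\<^sup>2"
      using norm_sq_expand[of "p - \<theta>" t "y - p"] by metis
    have "t * A \<le> t * (Y + inner (p - \<theta>) (y - p) + t * ((norm (y - p))\<^sup>2 / 2))"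
      using h3 M1 e by (simp add: algebra_simps power2_eq_square)
    then show ?thesis using t by simp
  qed
  then have "A \<le> Y + inner (p - \<theta>) (y - p)" by (rule lim_aux[where C = "(norm (y - p))\<^sup>2 / 2"]) auto
  moreover have "inner (\<theta> - p) (y - p) = - inner (p - \<theta>) (y - p)"
    by (metis inner_minus_left minus_diff_eq)
  ultimately show ?thesis using real by simp
qed

lemma prox_char:
  fixes f :: "'a::euclidean_space \<Rightarrow> ereal"
  assumes pcc: "proper_closed_convex f" and pp: "prox f \<theta> = p"
  shows "\<exists>A. f p = ereal A \<and> (\<forall>y. ereal (A + inner (\<theta> - p) (y - p)) \<le> f y)"
proof -
  let ?P = "\<lambda>\<delta>. \<forall>\<delta>'. f \<delta> + ereal ((norm (\<delta> - \<theta>))\<^sup>2 / 2) \<le> f \<delta>' + ereal ((norm (\<delta>' - \<theta>))\<^sup>2 / 2)"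
  have cv: "convex_efun f" and nm: "\<forall>x. f x \<noteq> -\<infinity>"
    using pcc unfolding proper_closed_convex_def proper_fun_def by auto
  obtain x0 where x0: "f x0 \<noteq> \<infinity>" using pcc unfolding proper_closed_convex_def proper_fun_def by blast
  have fin: "\<exists>A. f q = ereal A" if "?P q" for q
  proof -
    have "f q + ereal ((norm (q - \<theta>))\<^sup>2 / 2) \<le> f x0 + ereal ((norm (x0 - \<theta>))\<^sup>2 / 2)" using that by blast
    moreover have "f x0 + ereal ((norm (x0 - \<theta>))\<^sup>2 / 2) \<noteq> \<infinity>" using x0 nm by (cases "f x0") auto
    ultimately have "f q \<noteq> \<infinity>" by auto
    then show ?thesis using nm by (cases "f q") auto
  qed
  obtain q where q: "?P q" using prox_exists[OF pcc] by blast
  have ex1: "\<exists>!\<delta>. ?P \<delta>"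
  proof (rule ex1I[of _ q])
    show "?P q" by (rule q)
    fix r assume r: "?P r"
    obtain A where A: "f r = ereal A" using fin[OF r] by blast
    obtain B where B: "f q = ereal B" using fin[OF q] by blast
    show "r = q" by (rule prox_unique[OF cv nm A B r q])
  qed
  have "?P (prox f \<theta>)" unfolding prox_def by (rule theI'[OF ex1])
  then have Pp: "?P p" using pp by simp
  obtain A where A: "f p = ereal A" using fin[OF Pp] by blast
  show ?thesis using A prox_subgrad[OF cv nm A Pp] by blast
qed

lemma agent_ineq:
  fixes f0 :: "'a::euclidean_space \<Rightarrow> real" and f :: "nat \<Rightarrow> 'a \<Rightarrow> ereal" and m :: nat
  assumes m2: "m \<ge> 2"
    and sc: "strongly_convex c f0" and tc: "twice_cont_diff f0"
    and pcc: "\<forall>j\<in>{1..m}. proper_closed_convex (f j)"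
    and ex: "prox (f m) (p - grad f0 p + v + \<gamma> *\<^sub>R (\<Sum>j\<in>{1..m-1}. z j)) - p = 0"
    and ez: "\<forall>j\<in>{1..m-1}. prox (f j) (p - \<gamma> *\<^sub>R z j) - p = 0"
  shows "\<exists>C. ereal (f0 p) + (\<Sum>j\<in>{1..m}. f j p) = ereal C \<and>
     (\<forall>y. ereal (C + inner v (y - p)) \<le> ereal (f0 y) + (\<Sum>j\<in>{1..m}. f j y))"
proof -
  let ?g = "grad f0 p"
  define s where "s j = (if j = m then (p - ?g + v + \<gamma> *\<^sub>R (\<Sum>j\<in>{1..m-1}. z j)) - p else - (\<gamma> *\<^sub>R z j))" for j
  have "\<forall>j\<in>{1..m}. \<exists>A. f j p = ereal A \<and> (\<forall>y. ereal (A + inner (s j) (y - p)) \<le> f j y)"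
  proof
    fix j assume j: "j \<in> {1..m}"
    show "\<exists>A. f j p = ereal A \<and> (\<forall>y. ereal (A + inner (s j) (y - p)) \<le> f j y)"
    proof (cases "j = m")
      case True
      have "prox (f m) (p - ?g + v + \<gamma> *\<^sub>R (\<Sum>j\<in>{1..m-1}. z j)) = p" using ex by simp
      from prox_char[OF _ this] pcc j True show ?thesis unfolding s_def by simp
    next
      case False
      with j have j': "j \<in> {1..m-1}" by auto
      have "prox (f j) (p - \<gamma> *\<^sub>R z j) = p" using ez j' by simp
      from prox_char[OF _ this] pcc j False show ?thesis unfolding s_def by simp
    qed
  qed
  then obtain A where A: "\<And>j. j \<in> {1..m} \<Longrightarrow> f j p = ereal (A j)"
    and Ay: "\<And>j y. j \<in> {1..m} \<Longrightarrow> ereal (A j + inner (s j) (y - p)) \<le> f j y"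
    by metis
  have mset: "{1..m} = insert m {1..m-1}" using m2 atLeastAtMostSuc_conv[of 1 "m-1"] by simp
  have mnot: "m \<notin> {1..m-1}" using m2 by simp
  have ssum: "(\<Sum>j\<in>{1..m}. s j) = v - ?g"
  proof -
    have "(\<Sum>j\<in>{1..m-1}. s j) = (\<Sum>j\<in>{1..m-1}. - (\<gamma> *\<^sub>R z j))"
      by (rule sum.cong) (auto simp: s_def)
    also have "\<dots> = - (\<gamma> *\<^sub>R (\<Sum>j\<in>{1..m-1}. z j))" by (simp add: scaleR_sum_right sum_negf)
    finally have "(\<Sum>j\<in>{1..m-1}. s j) = - (\<gamma> *\<^sub>R (\<Sum>j\<in>{1..m-1}. z j))" .
    then show ?thesis unfolding mset using mnot by (simp add: s_def)
  qed
  have fp: "(\<Sum>j\<in>{1..m}. f j p) = ereal (\<Sum>j\<in>{1..m}. A j)"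
  proof -
    have "(\<Sum>j\<in>{1..m}. f j p) = (\<Sum>j\<in>{1..m}. ereal (A j))" by (rule sum.cong) (auto simp: A)
    then show ?thesis by simp
  qed
  show ?thesis
  proof (intro exI conjI allI)
    show "ereal (f0 p) + (\<Sum>j\<in>{1..m}. f j p) = ereal (f0 p + (\<Sum>j\<in>{1..m}. A j))" using fp by simp
    fix y
    have g: "f0 p + inner ?g (y - p) \<le> f0 y" using grad_ineq[OF sc tc] .
    have "ereal (\<Sum>j\<in>{1..m}. A j + inner (s j) (y - p)) = (\<Sum>j\<in>{1..m}. ereal (A j + inner (s j) (y - p)))"
      by simp
    also have "\<dots> \<le> (\<Sum>j\<in>{1..m}. f j y)" by (rule sum_mono) (rule Ay)
    finally have s1: "ereal (\<Sum>j\<in>{1..m}. A j + inner (s j) (y - p)) \<le> (\<Sum>j\<in>{1..m}. f j y)" .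
    have "(\<Sum>j\<in>{1..m}. A j + inner (s j) (y - p)) = (\<Sum>j\<in>{1..m}. A j) + inner (v - ?g) (y - p)"
      by (simp add: sum.distrib inner_sum_left[symmetric]) (metis One_nat_def ssum)
    with s1 have s2: "ereal ((\<Sum>j\<in>{1..m}. A j) + inner (v - ?g) (y - p)) \<le> (\<Sum>j\<in>{1..m}. f j y)" by simp
    have "ereal (f0 p + (\<Sum>j\<in>{1..m}. A j) + inner v (y - p))
        = ereal (f0 p + inner ?g (y - p)) + ereal ((\<Sum>j\<in>{1..m}. A j) + inner (v - ?g) (y - p))"
      by (simp add: inner_diff_left)
    also have "\<dots> \<le> ereal (f0 y) + (\<Sum>j\<in>{1..m}. f j y)"
      using g s2 by (intro add_mono) auto
    finally show "ereal (f0 p + (\<Sum>j\<in>{1..m}. A j) + inner v (y - p)) \<le> ereal (f0 y) + (\<Sum>j\<in>{1..m}. f j y)" .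
  qed
qed


lemma lap_expand:
  fixes a :: "'n::finite \<Rightarrow> 'n \<Rightarrow> real"
  shows "(\<Sum>j\<in>UNIV. laplacian a i j * u j) = (\<Sum>j\<in>UNIV. a i j * (u i - u j))"
proof -
  have "(\<Sum>j\<in>UNIV. laplacian a i j * u j)
      = (\<Sum>j\<in>UNIV. (if i = j then (\<Sum>k\<in>UNIV. a i k) * u j else 0)) - (\<Sum>j\<in>UNIV. a i j * u j)"
    unfolding laplacian_def by (simp add: left_diff_distrib sum_subtractf if_distrib[of "\<lambda>x. x * _"] cong: if_cong)
  also have "\<dots> = (\<Sum>k\<in>UNIV. a i k) * u i - (\<Sum>j\<in>UNIV. a i j * u j)" by simp
  also have "\<dots> = (\<Sum>j\<in>UNIV. a i j * (u i - u j))"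
    by (simp add: right_diff_distrib sum_subtractf sum_distrib_right)
  finally show ?thesis .
qed

lemma consensus_scalar:
  fixes a :: "'n::finite \<Rightarrow> 'n \<Rightarrow> real" and u :: "'n \<Rightarrow> real"
  assumes sc: "strongly_connected_graph a" and L: "\<forall>i. (\<Sum>j\<in>UNIV. laplacian a i j * u j) = 0"
  shows "u i = u j"
proof -
  have nn: "\<And>i j. a i j \<ge> 0" and conn: "\<And>i j. (i, j) \<in> {(k, l). a l k > 0}\<^sup>*"
    using sc unfolding strongly_connected_graph_def by auto
  define M where "M = Max (range u)"
  have uM: "u k \<le> M" for k unfolding M_def by (rule Max_ge) auto
  have clos: "u k = M" if l: "u l = M" and alk: "a l k > 0" for l k
  proof -
    have "(\<Sum>j\<in>UNIV. a l j * (M - u j)) = 0" using L lap_expand[of a l u] l by simp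
    moreover have "\<forall>j\<in>UNIV. 0 \<le> a l j * (M - u j)" using nn uM by simp
    ultimately have "\<forall>j\<in>UNIV. a l j * (M - u j) = 0"
      using sum_nonneg_eq_0_iff[of UNIV "\<lambda>j. a l j * (M - u j)"] by simp
    then have "a l k * (M - u k) = 0" by simp
    then show ?thesis using alk by simp
  qed
  have reach: "u j0 = M \<longrightarrow> u i0 = M" if "(i0, j0) \<in> {(k, l). a l k > 0}\<^sup>*" for i0 j0
    using that
  proof (induction rule: converse_rtrancl_induct)
    case base then show ?case by simp
  next
    case (step y z) then show ?case using clos by auto
  qed
  obtain j0 where j0: "u j0 = M"
  proof -
    have "M \<in> range u" unfolding M_def by (rule Max_in) auto
    then show ?thesis using that by auto
  qed
  have "u i = M" using reach[OF conn[of i j0]] j0 by simp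
  moreover have "u j = M" using reach[OF conn[of j j0]] j0 by simp
  ultimately show ?thesis by simp
qed

lemma consensus:
  fixes a :: "'n::finite \<Rightarrow> 'n \<Rightarrow> real" and v :: "'n \<Rightarrow> real^'q"
  assumes sc: "strongly_connected_graph a" and L: "\<forall>i. lap_apply a v i = 0"
  shows "v i = v j"
proof (rule vec_eq_iff[THEN iffD2], rule allI)
  fix k
  have "\<forall>i. (\<Sum>j\<in>UNIV. laplacian a i j * (v j $ k)) = 0"
  proof
    fix i
    have "lap_apply a v i $ k = 0" using L by simp
    then show "(\<Sum>j\<in>UNIV. laplacian a i j * (v j $ k)) = 0" unfolding lap_apply_def by simp
  qed
  from consensus_scalar[OF sc this] show "v i $ k = v j $ k" .
qed


theorem lemma5:
  fixes m :: nat and c \<alpha> \<gamma> :: real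
    and f0 :: "'n::finite \<Rightarrow> real^'q \<Rightarrow> real"
    and f :: "nat \<Rightarrow> 'n \<Rightarrow> real^'q \<Rightarrow> ereal"
    and a :: "'n \<Rightarrow> 'n \<Rightarrow> real" and h :: "'n \<Rightarrow> real"
    and d :: "'n \<Rightarrow> real^'q"
    and xs :: "'n \<Rightarrow> real^'q" and zs :: "nat \<Rightarrow> 'n \<Rightarrow> real^'q"
    and vs ws :: "'n \<Rightarrow> real^'q" and ys :: "'n \<Rightarrow> 'n \<Rightarrow> real"
  assumes m2: "m \<ge> 2"
    and A1: "\<forall>i. twice_cont_diff (f0 i) \<and> strongly_convex c (f0 i)" and c_gt: "c > real m - 1"
    and A2: "\<forall>j\<in>{1..m}. \<forall>i. proper_closed_convex (f j i)"
    and A3: "strongly_connected_graph a"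
    and A4: "\<exists>x::'n \<Rightarrow> real^'q. (\<Sum>i\<in>UNIV. x i) = (\<Sum>i\<in>UNIV. d i) \<and>
               (\<forall>i. (\<Sum>j\<in>{1..m}. f j i (x i)) < \<infinity>)"
    and h_pos: "\<forall>i. h i > 0"
    and h_left: "\<forall>j. (\<Sum>i\<in>UNIV. h i * laplacian a i j) = 0"
    and h_sum: "(\<Sum>i\<in>UNIV. h i) = 1"
    and alpha: "\<alpha> > 0"
    and gamma: "0 < \<gamma>" "\<gamma> < 1 / (real m - 1)"
    and eq_x: "\<forall>i. prox (f m i) (xs i - grad (f0 i) (xs i) + vs i + \<gamma> *\<^sub>R (\<Sum>j\<in>{1..m-1}. zs j i)) - xs i = 0"
    and eq_z: "\<forall>j\<in>{1..m-1}. \<forall>i. prox (f j i) (xs i - \<gamma> *\<^sub>R zs j i) - xs i = 0"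
    and eq_v: "\<forall>i. - ((1 / ys i i) *\<^sub>R (xs i - d i)) - \<alpha> *\<^sub>R lap_apply a vs i - ws i = 0"
    and eq_w: "\<forall>i. \<alpha> *\<^sub>R lap_apply a vs i = 0"
    and eq_y: "\<forall>i k. - (\<Sum>j\<in>UNIV. laplacian a i j * ys j k) = 0"
    and w_cond: "(\<Sum>i\<in>UNIV. h i *\<^sub>R ws i) = 0"
    and y_cond: "\<forall>i. ys i = h"
  shows "(\<Sum>i\<in>UNIV. xs i) = (\<Sum>i\<in>UNIV. d i) \<and>
         (\<forall>x::'n \<Rightarrow> real^'q. (\<Sum>i\<in>UNIV. x i) = (\<Sum>i\<in>UNIV. d i) \<longrightarrow>
            (\<Sum>i\<in>UNIV. ereal (f0 i (xs i)) + (\<Sum>j\<in>{1..m}. f j i (xs i)))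
              \<le> (\<Sum>i\<in>UNIV. ereal (f0 i (x i)) + (\<Sum>j\<in>{1..m}. f j i (x i))))"
  proof -
  have Lv: "\<forall>i. lap_apply a vs i = 0" using eq_w alpha by simp
  have xd: "xs i - d i = - (h i *\<^sub>R ws i)" for i
  proof -
    have "- ((1 / h i) *\<^sub>R (xs i - d i)) - ws i = 0" using eq_v Lv y_cond by simp
    then have "(1 / h i) *\<^sub>R (xs i - d i) = - ws i" by (simp add: algebra_simps)
    then have "h i *\<^sub>R ((1 / h i) *\<^sub>R (xs i - d i)) = - (h i *\<^sub>R ws i)" by simp
    moreover have "h i \<noteq> 0" using h_pos by (metis less_irrefl)
    ultimately show ?thesis by simp
  qed
  have sumx: "(\<Sum>i\<in>UNIV. xs i) = (\<Sum>i\<in>UNIV. d i)"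
  proof -
    have "(\<Sum>i\<in>UNIV. xs i) - (\<Sum>i\<in>UNIV. d i) = (\<Sum>i\<in>UNIV. xs i - d i)" by (simp add: sum_subtractf)
    also have "\<dots> = - (\<Sum>i\<in>UNIV. h i *\<^sub>R ws i)" by (simp add: xd sum_negf)
    also have "\<dots> = 0" using w_cond by simp
    finally show ?thesis by simp
  qed
  obtain i0 :: 'n where True by blast
  have vc: "vs i = vs i0" for i using consensus[OF A3 Lv] .
  have "\<forall>i. \<exists>C. ereal (f0 i (xs i)) + (\<Sum>j\<in>{1..m}. f j i (xs i)) = ereal C \<and>
     (\<forall>y. ereal (C + inner (vs i) (y - xs i)) \<le> ereal (f0 i y) + (\<Sum>j\<in>{1..m}. f j i y))"
  proof
    fix i
    show "\<exists>C. ereal (f0 i (xs i)) + (\<Sum>j\<in>{1..m}. f j i (xs i)) = ereal C \<and>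
     (\<forall>y. ereal (C + inner (vs i) (y - xs i)) \<le> ereal (f0 i y) + (\<Sum>j\<in>{1..m}. f j i y))"
      using agent_ineq[of m c "f0 i" "\<lambda>j. f j i" "xs i" "vs i" \<gamma> "\<lambda>j. zs j i"] m2 A1 A2 eq_x eq_z by simp
  qed
  then obtain C where C1: "\<And>i. ereal (f0 i (xs i)) + (\<Sum>j\<in>{1..m}. f j i (xs i)) = ereal (C i)"
    and C2: "\<And>i y. ereal (C i + inner (vs i) (y - xs i)) \<le> ereal (f0 i y) + (\<Sum>j\<in>{1..m}. f j i y)"
    by metis
  show ?thesis
  proof (intro conjI allI impI)
    show "(\<Sum>i\<in>UNIV. xs i) = (\<Sum>i\<in>UNIV. d i)" by (rule sumx)
    fix x :: "'n \<Rightarrow> real^'q"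
    assume fx: "(\<Sum>i\<in>UNIV. x i) = (\<Sum>i\<in>UNIV. d i)"
    have "(\<Sum>i\<in>UNIV. ereal (f0 i (xs i)) + (\<Sum>j\<in>{1..m}. f j i (xs i))) = (\<Sum>i\<in>UNIV. ereal (C i))"
      by (rule sum.cong[OF refl C1])
    also have "\<dots> = ereal (\<Sum>i\<in>UNIV. C i + inner (vs i) (x i - xs i))"
    proof -
      have "(\<Sum>i\<in>UNIV. inner (vs i) (x i - xs i)) = (\<Sum>i\<in>UNIV. inner (vs i0) (x i - xs i))"
        by (rule sum.cong[OF refl]) (metis vc)
      also have "\<dots> = inner (vs i0) ((\<Sum>i\<in>UNIV. x i) - (\<Sum>i\<in>UNIV. xs i))"
        by (simp add: inner_sum_right[symmetric] sum_subtractf)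
      also have "\<dots> = 0" using fx sumx by simp
      finally have "(\<Sum>i\<in>UNIV. inner (vs i) (x i - xs i)) = 0" .
      then show ?thesis by (simp add: sum.distrib)
    qed
    also have "\<dots> = (\<Sum>i\<in>UNIV. ereal (C i + inner (vs i) (x i - xs i)))" by simp
    also have "\<dots> \<le> (\<Sum>i\<in>UNIV. ereal (f0 i (x i)) + (\<Sum>j\<in>{1..m}. f j i (x i)))"
      by (rule sum_mono) (rule C2)
    finally show "(\<Sum>i\<in>UNIV. ereal (f0 i (xs i)) + (\<Sum>j\<in>{1..m}. f j i (xs i)))
              \<le> (\<Sum>i\<in>UNIV. ereal (f0 i (x i)) + (\<Sum>j\<in>{1..m}. f j i (x i)))" .
  qed
qed

end
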